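(* Let $(R,\mathfrak{m})$ be a Noetherian local domain of prime characteristic $p$. Then every prime ideal $\mathfrak{p}$ of $R_\infty$ is of the form $\sum_{i=1}^\ell(x_i^\infty)R_\infty$ for some $x_1,\dots,x_\ell\in R_\infty$. Moreover, if $\dim R<3$, there is an integer $\ell$, independent of $\mathfrak{p}$, such that every prime ideal of $R_\infty$ has this form with that $\ell$.
   Context: $R_\infty=\{x\in R^+: x^{p^n}\in R\text{ for some }n\ge0\}$, where $R^+$ is the integral closure of $R$ in an algebraic closure of its fraction field. For $x\in R_\infty$, $(x^\infty)R_\infty:=(x^{1/p^n}: n\ge0)R_\infty$. *)

theory Defs
  imports "HOL-Computational_Algebra.Polynomial"
begin

text \<open>Rings are modelled as subrings of a fixed field (the algebraic closure K of Frac R).\<close>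

definition subring_of :: "'a::comm_ring_1 set \<Rightarrow> bool" where
  "subring_of S \<longleftrightarrow> 0 \<in> S \<and> 1 \<in> S \<and> (\<forall>x\<in>S. \<forall>y\<in>S. x + y \<in> S \<and> x * y \<in> S \<and> - x \<in> S)"

definition ideal_in :: "'a::comm_ring_1 set \<Rightarrow> 'a set \<Rightarrow> bool" where
  "ideal_in S I \<longleftrightarrow> I \<subseteq> S \<and> 0 \<in> I \<and> (\<forall>x\<in>I. \<forall>y\<in>I. x + y \<in> I) \<and> (\<forall>r\<in>S. \<forall>x\<in>I. r * x \<in> I)"

definition prime_ideal_in :: "'a::comm_ring_1 set \<Rightarrow> 'a set \<Rightarrow> bool" where
  "prime_ideal_in S P \<longleftrightarrow> ideal_in S P \<and> P \<noteq> S \<and> (\<forall>x\<in>S. \<forall>y\<in>S. x * y \<in> P \<longrightarrow> x \<in> P \<or> y \<in> P)"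

definition maximal_ideal_in :: "'a::comm_ring_1 set \<Rightarrow> 'a set \<Rightarrow> bool" where
  "maximal_ideal_in S M \<longleftrightarrow> ideal_in S M \<and> M \<noteq> S \<and> (\<forall>I. ideal_in S I \<and> M \<subseteq> I \<longrightarrow> I = M \<or> I = S)"

definition local_ring :: "'a::comm_ring_1 set \<Rightarrow> bool" where
  "local_ring S \<longleftrightarrow> (\<exists>!M. maximal_ideal_in S M)"

text \<open>Ideal of S generated by A (smallest ideal containing A); sums of ideals are ideal_gen of unions.\<close>
definition ideal_gen :: "'a::comm_ring_1 set \<Rightarrow> 'a set \<Rightarrow> 'a set" where
  "ideal_gen S A = \<Inter>{I. ideal_in S I \<and> A \<subseteq> I}"

definition noetherian_ring :: "'a::comm_ring_1 set \<Rightarrow> bool" where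
  "noetherian_ring S \<longleftrightarrow> (\<forall>I. ideal_in S I \<longrightarrow> (\<exists>F. finite F \<and> F \<subseteq> I \<and> I = ideal_gen S F))"

definition krull_dim_less :: "'a::comm_ring_1 set \<Rightarrow> nat \<Rightarrow> bool" where
  "krull_dim_less S n \<longleftrightarrow>
     \<not> (\<exists>c :: nat \<Rightarrow> 'a set. (\<forall>i\<le>n. prime_ideal_in S (c i)) \<and> (\<forall>i<n. c i \<subset> c (Suc i)))"

definition alg_closed_field :: "'a::field itself \<Rightarrow> bool" where
  "alg_closed_field _ \<longleftrightarrow> (\<forall>q :: 'a poly. degree q > 0 \<longrightarrow> (\<exists>x. poly q x = 0))"

definition algebraic_over :: "'a::field set \<Rightarrow> bool" where
  "algebraic_over R \<longleftrightarrow> (\<forall>x :: 'a. \<exists>q. q \<noteq> 0 \<and> (\<forall>i. coeff q i \<in> R) \<and> poly q x = 0)"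

definition R_plus :: "'a::field set \<Rightarrow> 'a set" where
  "R_plus R = {x. \<exists>q. lead_coeff q = 1 \<and> (\<forall>i. coeff q i \<in> R) \<and> poly q x = 0}"

definition R_inf :: "nat \<Rightarrow> 'a::field set \<Rightarrow> 'a set" where
  "R_inf p R = {x \<in> R_plus R. \<exists>n. x ^ (p ^ n) \<in> R}"

text \<open>The p^n-th roots of x (unique in characteristic p).\<close>
definition pth_roots :: "nat \<Rightarrow> 'a::field \<Rightarrow> 'a set" where
  "pth_roots p x = {THE y. y ^ (p ^ n) = x | n. True}"

text \<open>(x^\<infinity>) S = (x^{1/p^n} : n \<ge> 0) S\<close>
definition inf_ideal :: "nat \<Rightarrow> 'a::field set \<Rightarrow> 'a \<Rightarrow> 'a set" where
  "inf_ideal p S x = ideal_gen S (pth_roots p x)"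

end

theory Submission
  imports Defs "HOL-Computational_Algebra.Primes"
begin


lemma ideal_in_S: "subring_of S \<Longrightarrow> ideal_in S S"
  unfolding ideal_in_def subring_of_def by auto

lemma gen_least: "ideal_in S I \<Longrightarrow> A \<subseteq> I \<Longrightarrow> ideal_gen S A \<subseteq> I"
  unfolding ideal_gen_def by auto

lemma gen_sub: "A \<subseteq> ideal_gen S A"
  unfolding ideal_gen_def by auto

lemma gen_mono: "A \<subseteq> B \<Longrightarrow> ideal_gen S A \<subseteq> ideal_gen S B"
  unfolding ideal_gen_def by auto

lemma gen_ideal: assumes "subring_of S" "A \<subseteq> S" shows "ideal_in S (ideal_gen S A)"
proof -
  have ne: "S \<in> {I. ideal_in S I \<and> A \<subseteq> I}" using assms ideal_in_S by auto
  show ?thesis unfolding ideal_in_def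
  proof (intro conjI ballI)
    show "ideal_gen S A \<subseteq> S" using ne unfolding ideal_gen_def by auto
    show "0 \<in> ideal_gen S A" unfolding ideal_gen_def ideal_in_def by auto
  next
    fix x y assume "x \<in> ideal_gen S A" "y \<in> ideal_gen S A"
    then show "x + y \<in> ideal_gen S A" unfolding ideal_gen_def ideal_in_def by auto
  next
    fix r x assume "r \<in> S" "x \<in> ideal_gen S A"
    then show "r * x \<in> ideal_gen S A" unfolding ideal_gen_def ideal_in_def by auto
  qed
qed

lemma ideal_sub: "ideal_in S I \<Longrightarrow> x \<in> I \<Longrightarrow> x \<in> S"
  unfolding ideal_in_def by auto
lemma ideal_0: "ideal_in S I \<Longrightarrow> 0 \<in> I"
  unfolding ideal_in_def by auto
lemma ideal_add: "ideal_in S I \<Longrightarrow> x \<in> I \<Longrightarrow> y \<in> I \<Longrightarrow> x + y \<in> I"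
  unfolding ideal_in_def by auto
lemma ideal_mult: "ideal_in S I \<Longrightarrow> r \<in> S \<Longrightarrow> x \<in> I \<Longrightarrow> r * x \<in> I"
  unfolding ideal_in_def by auto
lemma ideal_mult2: "ideal_in S I \<Longrightarrow> r \<in> S \<Longrightarrow> x \<in> I \<Longrightarrow> x * r \<in> I"
  unfolding ideal_in_def by (auto simp: mult.commute)
lemma ideal_neg: "subring_of S \<Longrightarrow> ideal_in S I \<Longrightarrow> x \<in> I \<Longrightarrow> - x \<in> I"
  using ideal_mult[of S I "-1" x] unfolding subring_of_def by auto
lemma ideal_diff: "subring_of S \<Longrightarrow> ideal_in S I \<Longrightarrow> x \<in> I \<Longrightarrow> y \<in> I \<Longrightarrow> x - y \<in> I"
  using ideal_add[of S I x "-y"] ideal_neg[of S I y] by auto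

lemma sub_add: "subring_of S \<Longrightarrow> x \<in> S \<Longrightarrow> y \<in> S \<Longrightarrow> x + y \<in> S"
  unfolding subring_of_def by auto
lemma sub_mult: "subring_of S \<Longrightarrow> x \<in> S \<Longrightarrow> y \<in> S \<Longrightarrow> x * y \<in> S"
  unfolding subring_of_def by auto
lemma sub_neg: "subring_of S \<Longrightarrow> x \<in> S \<Longrightarrow> - x \<in> S"
  unfolding subring_of_def by auto
lemma sub_1: "subring_of S \<Longrightarrow> 1 \<in> S"
  unfolding subring_of_def by auto
lemma sub_0: "subring_of S \<Longrightarrow> 0 \<in> S"
  unfolding subring_of_def by auto
lemma sub_pow: "subring_of S \<Longrightarrow> x \<in> S \<Longrightarrow> x ^ n \<in> S"
  by (induction n) (auto intro: sub_1 sub_mult)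
lemma sub_prod: "subring_of S \<Longrightarrow> (\<And>i. i \<in> A \<Longrightarrow> f i \<in> S) \<Longrightarrow> prod f A \<in> S"
  by (induction A rule: infinite_finite_induct) (auto intro: sub_1 sub_mult)
lemma ideal_sum: "ideal_in S I \<Longrightarrow> (\<And>i. i \<in> A \<Longrightarrow> f i \<in> I) \<Longrightarrow> sum f A \<in> I"
  by (induction A rule: infinite_finite_induct) (auto intro: ideal_0 ideal_add)

lemma prime_ideal: "prime_ideal_in S P \<Longrightarrow> ideal_in S P"
  unfolding prime_ideal_in_def by auto

lemma prime_pow: assumes "subring_of S" "prime_ideal_in S P" "x \<in> S" "x ^ n \<in> P" shows "x \<in> P"
  using assms(4)
proof (induction n)
  case 0
  then have "1 \<in> P" by simp
  then have "\<forall>r\<in>S. r \<in> P" using ideal_mult[OF prime_ideal[OF assms(2)], of _ 1] by auto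
  then show ?case using assms(2,3) prime_ideal[OF assms(2)] unfolding prime_ideal_in_def ideal_in_def by auto
next
  case (Suc n)
  then show ?case using assms(2,3) sub_pow[OF assms(1,3), of n] unfolding prime_ideal_in_def by auto
qed

lemma prod_notin_prime: assumes "subring_of S" "prime_ideal_in S P" "finite A"
  "\<And>i. i \<in> A \<Longrightarrow> f i \<in> S" "\<And>i. i \<in> A \<Longrightarrow> f i \<notin> P" shows "prod f A \<notin> P"
  using assms(3-)
proof (induction A rule: finite_induct)
  case empty
  then show ?case using prime_pow[OF assms(1,2) sub_1[OF assms(1)], of 0] sub_1[OF assms(1)] 
    assms(2) unfolding prime_ideal_in_def ideal_in_def by force
next
  case (insert x F)
  then show ?case using assms(2) sub_prod[OF assms(1), of F f] unfolding prime_ideal_in_def by auto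
qed

lemma prod_in_ideal: assumes "subring_of S" "ideal_in S I" "finite A" "j \<in> A"
  "\<And>i. i \<in> A \<Longrightarrow> f i \<in> S" "f j \<in> I" shows "prod f A \<in> I"
proof -
  have "prod f A = f j * prod f (A - {j})" using assms(3,4) by (simp add: prod.remove)
  then show ?thesis using ideal_mult2[OF assms(2) sub_prod[OF assms(1), of "A - {j}" f] assms(6)] assms(5) by auto
qed



lemma noeth_max:
  assumes noeth: "noetherian_ring S" and sr: "subring_of S" and ne: "I0 \<in> \<F>"
    and ids: "\<And>I. I \<in> \<F> \<Longrightarrow> ideal_in S I"
  shows "\<exists>M\<in>\<F>. \<forall>I\<in>\<F>. M \<subseteq> I \<longrightarrow> I = M"
proof (rule ccontr)
  assume "\<not> ?thesis"
  then have step: "\<forall>M\<in>\<F>. \<exists>I\<in>\<F>. M \<subset> I" by blast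
  define g where "g M = (SOME I. I \<in> \<F> \<and> M \<subset> I)" for M
  have g: "M \<in> \<F> \<Longrightarrow> g M \<in> \<F> \<and> M \<subset> g M" for M
    unfolding g_def using step by (metis (mono_tags, lifting) someI_ex)
  define f where "f n = (g ^^ n) I0" for n
  have fF: "f n \<in> \<F>" for n by (induction n) (auto simp: f_def ne g)
  have fs: "f n \<subset> f (Suc n)" for n using g[OF fF[of n]] by (simp add: f_def)
  have fm: "n \<le> n' \<Longrightarrow> f n \<subseteq> f n'" for n n'
    using lift_Suc_mono_le[of f n n'] fs by auto
  define U where "U = (\<Union>n. f n)"
  have U: "ideal_in S U" unfolding ideal_in_def
  proof (intro conjI ballI)
    show "U \<subseteq> S" unfolding U_def using ideal_sub[OF ids[OF fF]] by blast
    show "0 \<in> U" using ids[OF fF[of 0]] unfolding U_def ideal_in_def by auto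
  next
    fix x y assume "x \<in> U" "y \<in> U"
    then obtain i j where "x \<in> f i" "y \<in> f j" unfolding U_def by auto
    then have "x \<in> f (max i j)" "y \<in> f (max i j)" using fm[of i "max i j"] fm[of j "max i j"] by auto
    then show "x + y \<in> U" using ideal_add[OF ids[OF fF]] unfolding U_def by blast
  next
    fix r x assume "r \<in> S" "x \<in> U"
    then show "r * x \<in> U" using ideal_mult[OF ids[OF fF]] unfolding U_def by blast
  qed
  obtain F where F: "finite F" "F \<subseteq> U" "U = ideal_gen S F"
    using noeth U unfolding noetherian_ring_def by blast
  have "\<exists>N. F \<subseteq> f N" using F(1,2)
  proof (induction F rule: finite_induct)
    case empty then show ?case by auto
  next
    case (insert x F)
    then obtain N where N: "F \<subseteq> f N" by auto
    obtain i where i: "x \<in> f i" using insert(4) unfolding U_def by auto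
    have "insert x F \<subseteq> f (max N i)" using N i fm[of N "max N i"] fm[of i "max N i"] by auto
    then show ?case by blast
  qed
  then obtain N where "F \<subseteq> f N" by auto
  then have "U \<subseteq> f N" using F(3) gen_least[OF ids[OF fF]] by auto
  moreover have "f (Suc N) \<subseteq> U" unfolding U_def by auto
  ultimately show False using fs[of N] by auto
qed

lemma gen_insert_form:
  fixes S :: "'a::comm_ring_1 set"
  assumes sr: "subring_of S" and Q: "ideal_in S Q" and a: "a \<in> S" and z: "z \<in> ideal_gen S (insert a Q)"
  shows "\<exists>q s. q \<in> Q \<and> s \<in> S \<and> z = q + s * a"
proof -
  define T where "T = {q + s * a | q s. q \<in> Q \<and> s \<in> S}"
  have "ideal_in S T" unfolding ideal_in_def
  proof (intro conjI ballI)
    show "T \<subseteq> S"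
    proof
      fix x assume "x \<in> T"
      then obtain q s where "x = q + s * a" "q \<in> Q" "s \<in> S" unfolding T_def by blast
      then show "x \<in> S" using sub_add[OF sr ideal_sub[OF Q] sub_mult[OF sr _ a]] by blast
    qed
    have "0 = 0 + 0 * a" "0 \<in> Q" "(0::'a) \<in> S" using ideal_0[OF Q] sub_0[OF sr] by auto
    then show "0 \<in> T" unfolding T_def by blast
  next
    fix x y assume "x \<in> T" "y \<in> T"
    then obtain q1 s1 q2 s2 where "x = q1 + s1 * a" "y = q2 + s2 * a" "q1 \<in> Q" "q2 \<in> Q" "s1 \<in> S" "s2 \<in> S"
      unfolding T_def by auto
    then have "x + y = (q1+q2) + (s1+s2) * a" "q1+q2 \<in> Q" "s1+s2 \<in> S"
      using ideal_add[OF Q] sub_add[OF sr] by (auto simp: algebra_simps)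
    then show "x + y \<in> T" unfolding T_def by blast
  next
    fix r x assume "r \<in> S" "x \<in> T"
    then obtain q1 s1 where "x = q1 + s1 * a" "q1 \<in> Q" "s1 \<in> S"
      unfolding T_def by auto
    then have "r * x = (r*q1) + (r*s1) * a" "r*q1 \<in> Q" "r*s1 \<in> S"
      using ideal_mult[OF Q] sub_mult[OF sr] \<open>r \<in> S\<close> by (auto simp: distrib_left mult.assoc)
    then show "r * x \<in> T" unfolding T_def by blast
  qed
  moreover have "insert a Q \<subseteq> T" unfolding T_def
  proof
    fix x assume "x \<in> insert a Q"
    then show "x \<in> {q + s * a |q s. q \<in> Q \<and> s \<in> S}"
    proof
      assume "x = a"
      then have "x = 0 + 1 * a" "0 \<in> Q" "(1::'a) \<in> S" using ideal_0[OF Q] sub_1[OF sr] by auto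
      then show ?thesis by blast
    next
      assume "x \<in> Q"
      then have "x = x + 0 * a" "x \<in> Q" "(0::'a) \<in> S" using sub_0[OF sr] by auto
      then show ?thesis by blast
    qed
  qed
  ultimately show ?thesis using gen_least z unfolding T_def by blast
qed

lemma gen_insert_ideal: "subring_of S \<Longrightarrow> ideal_in S Q \<Longrightarrow> a \<in> S \<Longrightarrow> ideal_in S (ideal_gen S (insert a Q))"
  using gen_ideal ideal_sub by (metis insert_subset subsetI)

lemma prime_avoid_pow:
  fixes S :: "'a::comm_ring_1 set"
  assumes noeth: "noetherian_ring S" and sr: "subring_of S" and I: "ideal_in S I"
    and w: "w \<in> S" and nw: "\<forall>k. w ^ k \<notin> I"
  shows "\<exists>Q. prime_ideal_in S Q \<and> I \<subseteq> Q \<and> w \<notin> Q"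
proof -
  define \<F> where "\<F> = {J. ideal_in S J \<and> I \<subseteq> J \<and> (\<forall>k. w ^ k \<notin> J)}"
  have "I \<in> \<F>" unfolding \<F>_def using I nw by blast
  then obtain Q where Q: "Q \<in> \<F>" and mx: "\<forall>J\<in>\<F>. Q \<subseteq> J \<longrightarrow> J = Q"
    using noeth_max[OF noeth sr, of I \<F>] unfolding \<F>_def by blast
  have Qi: "ideal_in S Q" and IQ: "I \<subseteq> Q" and nQ: "\<forall>k. w ^ k \<notin> Q" using Q unfolding \<F>_def by auto
  have big: "\<exists>k q s. q \<in> Q \<and> s \<in> S \<and> w ^ k = q + s * a" if a: "a \<in> S" "a \<notin> Q" for a
  proof -
    let ?J = "ideal_gen S (insert a Q)"
    have Ji: "ideal_in S ?J" using gen_insert_ideal[OF sr Qi a(1)] .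
    have QJ: "Q \<subseteq> ?J" "a \<in> ?J" using gen_sub[of "insert a Q" S] by auto
    have "?J \<noteq> Q" using QJ a(2) by blast
    then have "?J \<notin> \<F>" using mx QJ(1) by blast
    then obtain k where "w ^ k \<in> ?J" using Ji QJ IQ unfolding \<F>_def by blast
    then show ?thesis using gen_insert_form[OF sr Qi a(1)] by blast
  qed
  have "prime_ideal_in S Q" unfolding prime_ideal_in_def
  proof (intro conjI ballI impI)
    show "ideal_in S Q" by fact
    have "w ^ 0 \<notin> Q" using nQ by blast
    then show "Q \<noteq> S" using sub_1[OF sr] by auto
  next
    fix a b assume ab: "a \<in> S" "b \<in> S" "a * b \<in> Q"
    show "a \<in> Q \<or> b \<in> Q"
    proof (rule ccontr)
      assume "\<not> ?thesis"
      then have "a \<notin> Q" "b \<notin> Q" by auto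
      obtain k1 q1 s1 where A: "q1 \<in> Q" "s1 \<in> S" "w ^ k1 = q1 + s1 * a"
        using big[OF ab(1) \<open>a \<notin> Q\<close>] by blast
      obtain k2 q2 s2 where B: "q2 \<in> Q" "s2 \<in> S" "w ^ k2 = q2 + s2 * b"
        using big[OF ab(2) \<open>b \<notin> Q\<close>] by blast
      have "w ^ (k1 + k2) = q1 * w ^ k2 + (s1 * a) * q2 + (s1 * s2) * (a * b)"
        by (simp add: power_add A(3) B(3) algebra_simps)
      moreover have "q1 * w ^ k2 \<in> Q" by (rule ideal_mult2[OF Qi sub_pow[OF sr w] A(1)])
      moreover have "(s1 * a) * q2 \<in> Q" by (rule ideal_mult[OF Qi sub_mult[OF sr A(2) ab(1)] B(1)])
      moreover have "(s1 * s2) * (a * b) \<in> Q" by (rule ideal_mult[OF Qi sub_mult[OF sr A(2) B(2)] ab(3)])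
      ultimately have "w ^ (k1 + k2) \<in> Q" using ideal_add[OF Qi] by presburger
      then show False using nQ by blast
    qed
  qed
  moreover have "w \<notin> Q" using nQ spec[OF nQ, of 1] by simp
  ultimately show ?thesis using IQ by blast
qed

definition good_primes :: "'a::comm_ring_1 set \<Rightarrow> 'a set \<Rightarrow> bool" where
  "good_primes S I \<longleftrightarrow> (\<exists>F. finite F \<and> (\<forall>f\<in>F. prime_ideal_in S f \<and> I \<subseteq> f)
      \<and> (\<forall>P. prime_ideal_in S P \<and> I \<subseteq> P \<longrightarrow> (\<exists>f\<in>F. f \<subseteq> P)))"

lemma good_ext:
  fixes S :: "'a::comm_ring_1 set"
  assumes sr: "subring_of S" and Mi: "ideal_in S M" and a: "a \<in> S"
    and g: "good_primes S (ideal_gen S (insert a M))"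
  obtains F where "finite F" "\<forall>f\<in>F. prime_ideal_in S f \<and> M \<subseteq> f"
      "\<forall>P. prime_ideal_in S P \<and> M \<subseteq> P \<and> a \<in> P \<longrightarrow> (\<exists>f\<in>F. f \<subseteq> P)"
proof -
  obtain F where F: "finite F" "\<forall>f\<in>F. prime_ideal_in S f \<and> ideal_gen S (insert a M) \<subseteq> f"
      "\<forall>P. prime_ideal_in S P \<and> ideal_gen S (insert a M) \<subseteq> P \<longrightarrow> (\<exists>f\<in>F. f \<subseteq> P)"
    using g unfolding good_primes_def by blast
  have M: "M \<subseteq> ideal_gen S (insert a M)" using gen_sub[of "insert a M" S] by blast
  have X1: "\<forall>f\<in>F. prime_ideal_in S f \<and> M \<subseteq> f" using F(2) M by blast
  have X2: "\<exists>f\<in>F. f \<subseteq> P" if P: "prime_ideal_in S P" "M \<subseteq> P" "a \<in> P" for P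
  proof -
    have "insert a M \<subseteq> P" using P by blast
    then have "ideal_gen S (insert a M) \<subseteq> P" by (rule gen_least[OF prime_ideal[OF P(1)]])
    then show ?thesis using F(3) P(1) by blast
  qed
  show ?thesis
  proof (rule that[OF F(1) X1], intro allI impI)
    fix P assume "prime_ideal_in S P \<and> M \<subseteq> P \<and> a \<in> P"
    then show "\<exists>f\<in>F. f \<subseteq> P" using X2 by blast
  qed
qed

lemma fin_primes:
  fixes S :: "'a::comm_ring_1 set"
  assumes noeth: "noetherian_ring S" and sr: "subring_of S" and I: "ideal_in S I"
  shows "good_primes S I"
proof (rule ccontr)
  assume nI: "\<not> good_primes S I"
  define \<F> where "\<F> = {J. ideal_in S J \<and> \<not> good_primes S J}"
  have "I \<in> \<F>" unfolding \<F>_def using I nI by blast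
  then obtain M where M: "M \<in> \<F>" and mx: "\<forall>J\<in>\<F>. M \<subseteq> J \<longrightarrow> J = M"
    using noeth_max[OF noeth sr, of I \<F>] unfolding \<F>_def by blast
  have Mi: "ideal_in S M" and nM: "\<not> good_primes S M" using M unfolding \<F>_def by auto
  have MS: "M \<noteq> S"
  proof
    assume MS: "M = S"
    have "\<forall>P. prime_ideal_in S P \<longrightarrow> \<not> M \<subseteq> P"
      unfolding MS prime_ideal_in_def ideal_in_def by blast
    then have "good_primes S M" unfolding good_primes_def
      by (intro exI[of _ "{}"]) simp
    then show False using nM by auto
  qed
  have npr: "\<not> prime_ideal_in S M"
  proof
    assume "prime_ideal_in S M"
    then have "good_primes S M" unfolding good_primes_def by (intro exI[of _ "{M}"]) auto
    then show False using nM by auto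
  qed
  then obtain a b where ab: "a \<in> S" "b \<in> S" "a * b \<in> M" "a \<notin> M" "b \<notin> M"
    using Mi MS unfolding prime_ideal_in_def by blast
  have gd: "good_primes S (ideal_gen S (insert c M))" if c: "c \<in> S" "c \<notin> M" for c
  proof (rule ccontr)
    assume "\<not> ?thesis"
    then have "ideal_gen S (insert c M) \<in> \<F>" unfolding \<F>_def using gen_insert_ideal[OF sr Mi c(1)] by blast
    moreover have "M \<subseteq> ideal_gen S (insert c M)" "c \<in> ideal_gen S (insert c M)" using gen_sub[of "insert c M" S] by auto
    ultimately have "ideal_gen S (insert c M) = M" using mx by blast
    then show False using c(2) \<open>c \<in> ideal_gen S (insert c M)\<close> by blast
  qed
  obtain Fa where Fa: "finite Fa" "\<forall>f\<in>Fa. prime_ideal_in S f \<and> M \<subseteq> f"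
      "\<forall>P. prime_ideal_in S P \<and> M \<subseteq> P \<and> a \<in> P \<longrightarrow> (\<exists>f\<in>Fa. f \<subseteq> P)"
    by (rule good_ext[OF sr Mi ab(1) gd[OF ab(1,4)]])
  obtain Fb where Fb: "finite Fb" "\<forall>f\<in>Fb. prime_ideal_in S f \<and> M \<subseteq> f"
      "\<forall>P. prime_ideal_in S P \<and> M \<subseteq> P \<and> b \<in> P \<longrightarrow> (\<exists>f\<in>Fb. f \<subseteq> P)"
    by (rule good_ext[OF sr Mi ab(2) gd[OF ab(2,5)]])
  have "good_primes S M" unfolding good_primes_def
  proof (intro exI[of _ "Fa \<union> Fb"] conjI allI impI ballI)
    show "finite (Fa \<union> Fb)" using Fa(1) Fb(1) by blast
  next
    fix f assume "f \<in> Fa \<union> Fb"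
    then show "prime_ideal_in S f" "M \<subseteq> f" using Fa(2) Fb(2) by blast+
  next
    fix P assume P: "prime_ideal_in S P \<and> M \<subseteq> P"
    then have "a \<in> P \<or> b \<in> P" using ab(1-3) unfolding prime_ideal_in_def by blast
    then show "\<exists>f\<in>Fa \<union> Fb. f \<subseteq> P"
    proof
      assume "a \<in> P" then show ?thesis using Fa(3) P by blast
    next
      assume "b \<in> P" then show ?thesis using Fb(3) P by blast
    qed
  qed
  then show False using nM by blast
qed

lemma avoid:
  fixes S :: "'a::comm_ring_1 set"
  assumes sr: "subring_of S" and G: "finite G" and Gp: "\<And>g. g \<in> G \<Longrightarrow> prime_ideal_in S g"
    and q: "ideal_in S q" and nq: "\<And>g. g \<in> G \<Longrightarrow> \<not> q \<subseteq> g"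
    and inc: "\<And>g h. g \<in> G \<Longrightarrow> h \<in> G \<Longrightarrow> g \<noteq> h \<Longrightarrow> \<not> h \<subseteq> g"
  shows "\<exists>y\<in>q. \<forall>g\<in>G. y \<notin> g"
proof -
  define a :: "'a set \<Rightarrow> 'a" where "a g = (SOME x. x \<in> q \<and> x \<notin> g)" for g
  have a: "a g \<in> q \<and> a g \<notin> g" if "g \<in> G" for g
  proof -
    have "\<exists>x. x \<in> q \<and> x \<notin> g" using nq[OF that] by blast
    then show ?thesis unfolding a_def by (rule someI_ex)
  qed
  define b :: "'a set \<Rightarrow> 'a set \<Rightarrow> 'a" where "b g h = (SOME x. x \<in> h \<and> x \<notin> g)" for g h
  have b: "b g h \<in> h \<and> b g h \<notin> g" if "g \<in> G" "h \<in> G" "g \<noteq> h" for g h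
  proof -
    have "\<exists>x. x \<in> h \<and> x \<notin> g" using inc[OF that] by blast
    then show ?thesis unfolding b_def by (rule someI_ex)
  qed
  have bS: "b g h \<in> S" if "g \<in> G" "h \<in> G" "g \<noteq> h" for g h
    using b[OF that] ideal_sub[OF prime_ideal[OF Gp[OF that(2)]]] by blast
  have aS: "a g \<in> S" if "g \<in> G" for g
    using a[OF that] ideal_sub[OF q] by blast
  define z where "z g = (\<Prod>h\<in>G-{g}. b g h) * a g" for g
  have pS: "(\<Prod>h\<in>G-{g}. b g h) \<in> S" if "g \<in> G" for g
    by (rule sub_prod[OF sr]) (use bS that in auto)
  have zq: "z g \<in> q" if "g \<in> G" for g
    unfolding z_def using a[OF that] by (intro ideal_mult[OF q pS[OF that]]) blast
  have zg: "z g \<notin> g" if g: "g \<in> G" for g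
  proof
    assume zin: "z g \<in> g"
    have pn: "(\<Prod>h\<in>G-{g}. b g h) \<notin> g"
      by (rule prod_notin_prime[OF sr Gp[OF g]]) (use G b bS g in auto)
    have "(\<Prod>h\<in>G-{g}. b g h) \<in> g \<or> a g \<in> g"
      using Gp[OF g] pS[OF g] aS[OF g] zin unfolding z_def prime_ideal_in_def by blast
    then show False using pn a[OF g] by blast
  qed
  have zh: "z g \<in> h" if gh: "g \<in> G" "h \<in> G" "g \<noteq> h" for g h
  proof -
    have "(\<Prod>h\<in>G-{g}. b g h) \<in> h"
      by (rule prod_in_ideal[OF sr prime_ideal[OF Gp[OF gh(2)]], of "G-{g}" h "b g"]) (use G gh b bS in auto)
    then show ?thesis unfolding z_def by (rule ideal_mult2[OF prime_ideal[OF Gp[OF gh(2)]] aS[OF gh(1)]])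
  qed
  define y where "y = (\<Sum>g\<in>G. z g)"
  have "y \<in> q" unfolding y_def using ideal_sum[OF q, of G z] zq by blast
  moreover have "y \<notin> g" if g: "g \<in> G" for g
  proof
    assume yg: "y \<in> g"
    have "y = z g + (\<Sum>h\<in>G-{g}. z h)" unfolding y_def using G g by (simp add: sum.remove)
    moreover have r: "(\<Sum>h\<in>G-{g}. z h) \<in> g" using ideal_sum[OF prime_ideal[OF Gp[OF g]], of "G-{g}" z] zh[OF _ g] by auto
    ultimately have "z g = y - (\<Sum>h\<in>G-{g}. z h)" by simp
    also have "\<dots> \<in> g" using ideal_diff[OF sr prime_ideal[OF Gp[OF g]] yg r] .
    finally show False using zg[OF g] by auto
  qed
  ultimately show ?thesis by auto
qed



lemma char_eq:
  assumes "prime p" "(of_nat p :: 'a::field) = 0" shows "CHAR('a) = p"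
proof -
  have d: "CHAR('a) dvd p" using assms(2) of_nat_eq_0_iff_char_dvd by blast
  have "CHAR('a) \<noteq> 1"
  proof
    assume "CHAR('a) = 1"
    then have "(of_nat 1 :: 'a) = 0" by (metis of_nat_CHAR)
    then show False by simp
  qed
  then show ?thesis using d assms(1) by (auto simp: prime_nat_iff)
qed

definition rt :: "nat \<Rightarrow> nat \<Rightarrow> 'a::field \<Rightarrow> 'a" where
  "rt p n x = (THE y. y ^ (p ^ n) = x)"

lemma pth_roots_rt: "pth_roots p x = range (\<lambda>n. rt p n x)"
  unfolding pth_roots_def rt_def by auto

context
  fixes p :: nat and R :: "'a::field set"
  assumes ac: "alg_closed_field TYPE('a)" and pr: "prime p" and ch: "(of_nat p :: 'a) = 0"
begin

lemma frob_add: "(x + y :: 'a) ^ (p ^ n) = x ^ (p ^ n) + y ^ (p ^ n)"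
  using freshmans_dream'[of "p ^ n" n x y] char_eq[OF pr ch] pr by simp

lemma frob_inj: assumes "(x :: 'a) ^ (p ^ n) = y ^ (p ^ n)" shows "x = y"
proof -
  have "((x - y) + y) ^ (p ^ n) = (x - y) ^ (p ^ n) + y ^ (p ^ n)" by (rule frob_add)
  then have "(x - y) ^ (p ^ n) = 0" using assms by simp
  then show ?thesis by simp
qed

lemma p_pos: "p ^ n > 0" using pr by (simp add: prime_gt_0_nat)

lemma root_ex: "\<exists>y::'a. y ^ (p ^ n) = (x::'a)"
proof -
  let ?q = "monom (1::'a) (p ^ n) + [:-x:]"
  have "degree ?q = p ^ n"
    using p_pos[of n] by (subst degree_add_eq_left) (auto simp: degree_monom_eq)
  then have "degree ?q > 0" using p_pos[of n] by simp
  then obtain y where "poly ?q y = 0" using ac unfolding alg_closed_field_def by blast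
  then show ?thesis by (auto simp: poly_monom)
qed

lemma rt_pow: "rt p n (x::'a) ^ (p ^ n) = x"
proof -
  have "\<exists>!y::'a. y ^ (p ^ n) = x" using root_ex frob_inj by blast
  then show ?thesis unfolding rt_def by (rule theI')
qed

lemma rt_unique: "(y::'a) ^ (p ^ n) = x \<Longrightarrow> rt p n x = y"
  using rt_pow[of n x] frob_inj[of "rt p n x" n y] by simp

lemma rt_add: "rt p n ((a::'a) + b) = rt p n a + rt p n b"
  by (rule rt_unique) (simp add: frob_add rt_pow)

lemma rt_mult: "rt p n ((a::'a) * b) = rt p n a * rt p n b"
  by (rule rt_unique) (simp add: power_mult_distrib rt_pow)

lemma rt_0: "rt p n (0::'a) = 0"
  by (rule rt_unique) (use p_pos[of n] in simp)

lemma rt_powp: "rt p n ((z::'a) ^ (p ^ n)) = z"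
  by (rule rt_unique) simp

lemma pow_up: assumes "subring_of R" "x ^ (p ^ a) \<in> R" shows "x ^ (p ^ (a + b)) \<in> R"
proof -
  have "x ^ (p ^ (a + b)) = (x ^ (p ^ a)) ^ (p ^ b)" by (simp add: power_add power_mult)
  then show ?thesis using sub_pow[OF assms] by simp
qed

lemma R_inf_iff: assumes sr: "subring_of R" shows "x \<in> R_inf p R \<longleftrightarrow> (\<exists>n. x ^ (p ^ n) \<in> R)"
proof
  assume "\<exists>n. x ^ (p ^ n) \<in> R"
  then obtain n where n: "x ^ (p ^ n) \<in> R" by blast
  let ?N = "p ^ n" and ?c = "x ^ (p ^ n)"
  let ?q = "monom (1::'a) ?N + [:-?c:]"
  have dq: "degree ?q = ?N"
    using p_pos[of n] by (subst degree_add_eq_left) (auto simp: degree_monom_eq)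
  have "lead_coeff ?q = 1" unfolding dq using p_pos[of n] by (simp add: coeff_pCons')
  moreover have "coeff ?q i \<in> R" for i
    using sub_0[OF sr] sub_1[OF sr] sub_neg[OF sr n] p_pos[of n]
    by (cases "i = 0") (auto simp: coeff_pCons')
  moreover have "poly ?q x = 0" by (simp add: poly_monom)
  ultimately have "x \<in> R_plus R" unfolding R_plus_def by blast
  then show "x \<in> R_inf p R" unfolding R_inf_def using n by blast
qed (auto simp: R_inf_def)

lemma R_sub_inf: "subring_of R \<Longrightarrow> x \<in> R \<Longrightarrow> x \<in> R_inf p R"
  using R_inf_iff[of x] by (intro iffD2[OF R_inf_iff]) (auto intro: exI[of _ 0])

lemma R_inf_subring: assumes sr: "subring_of R" shows "subring_of (R_inf p R)"
  unfolding subring_of_def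
proof (intro conjI ballI)
  show "0 \<in> R_inf p R" "1 \<in> R_inf p R" using R_sub_inf[OF sr] sub_0[OF sr] sub_1[OF sr] by auto
next
  fix x y assume "x \<in> R_inf p R" "y \<in> R_inf p R"
  then obtain a b where a: "x ^ (p ^ a) \<in> R" and b: "y ^ (p ^ b) \<in> R" using R_inf_iff[OF sr] by blast
  have a': "x ^ (p ^ (a + b)) \<in> R" using pow_up[OF sr a] .
  have b': "y ^ (p ^ (a + b)) \<in> R" using pow_up[OF sr b, of a] by (simp add: add.commute)
  have "(x + y) ^ (p ^ (a + b)) \<in> R" unfolding frob_add using sub_add[OF sr a' b'] .
  moreover have "(x * y) ^ (p ^ (a + b)) \<in> R" unfolding power_mult_distrib using sub_mult[OF sr a' b'] .
  moreover have "(- x) ^ (p ^ (a + b)) \<in> R"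
  proof -
    have "(- x) ^ (p ^ (a + b)) = (-1) ^ (p ^ (a + b)) * x ^ (p ^ (a + b))"
      by (metis mult_minus1 power_mult_distrib)
    then show ?thesis using sub_mult[OF sr sub_pow[OF sr sub_neg[OF sr sub_1[OF sr]]] a'] by simp
  qed
  ultimately show "x + y \<in> R_inf p R" "x * y \<in> R_inf p R" "- x \<in> R_inf p R"
    using R_inf_iff[OF sr] by blast+
qed

lemma rt_inf: assumes sr: "subring_of R" and x: "x \<in> R_inf p R" shows "rt p m x \<in> R_inf p R"
proof -
  obtain n where n: "x ^ (p ^ n) \<in> R" using x R_inf_iff[OF sr] by blast
  have "rt p m x ^ (p ^ (m + n)) = x ^ (p ^ n)"
    by (simp add: power_add power_mult rt_pow)
  then show ?thesis using n R_inf_iff[OF sr] by metis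
qed

end


lemma pow_in_ideal: "ideal_in S I \<Longrightarrow> x \<in> I \<Longrightarrow> x ^ Suc k \<in> I"
  by (induction k) (auto intro: ideal_mult2 ideal_sub)

lemma k_less_pow: "2 \<le> (p::nat) \<Longrightarrow> k < p ^ k"
  by (rule power_gt_expt) simp

context
  fixes p :: nat and R :: "'a::field set"
  assumes ac: "alg_closed_field TYPE('a)" and pr: "prime p" and ch: "(of_nat p :: 'a) = 0"
    and sr: "subring_of R"
begin

lemma red:
  assumes P: "prime_ideal_in (R_inf p R) P" and xsP: "set xs \<subseteq> P" and xsR: "set xs \<subseteq> R"
    and rad: "\<forall>w\<in>P \<inter> R. \<exists>k. w ^ k \<in> ideal_gen R (set xs)"
  shows "P = ideal_gen (R_inf p R) (\<Union>x\<in>set xs. pth_roots p x)"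
proof
  let ?S = "R_inf p R"
  let ?A = "\<Union>x\<in>set xs. pth_roots p x"
  let ?J = "ideal_gen ?S ?A"
  have sS: "subring_of ?S" by (rule R_inf_subring[OF ac pr ch sr])
  have AS: "?A \<subseteq> ?S"
    using rt_inf[OF ac pr ch sr] R_sub_inf[OF ac pr ch sr] xsR unfolding pth_roots_rt by blast
  have Ji: "ideal_in ?S ?J" by (rule gen_ideal[OF sS AS])
  have "?A \<subseteq> P"
  proof
    fix y assume "y \<in> ?A"
    then obtain x n where x: "x \<in> set xs" and y: "y = rt p n x" unfolding pth_roots_rt by blast
    have yS: "y \<in> ?S" using rt_inf[OF ac pr ch sr] R_sub_inf[OF ac pr ch sr] xsR x y by blast
    have "y ^ (p ^ n) \<in> P" using rt_pow[OF ac pr ch, of n x] y xsP x by auto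
    then show "y \<in> P" by (rule prime_pow[OF sS P yS])
  qed
  then show "?J \<subseteq> P" by (rule gen_least[OF prime_ideal[OF P]])
  show "P \<subseteq> ?J"
  proof
    fix z assume zP: "z \<in> P"
    have zS: "z \<in> ?S" using ideal_sub[OF prime_ideal[OF P] zP] .
    obtain n where n: "z ^ (p ^ n) \<in> R" using zS R_inf_iff[OF ac pr ch sr] by blast
    have "Suc (p ^ n - 1) = p ^ n" using p_pos[OF ac pr ch, of n] by simp
    then have "z ^ (p ^ n) \<in> P"
      using pow_in_ideal[OF prime_ideal[OF P] zP, of "p ^ n - 1"] by metis
    then obtain k where k: "(z ^ (p ^ n)) ^ k \<in> ideal_gen R (set xs)" using rad n by blast
    define T where "T = {u \<in> R. \<forall>m. rt p m u \<in> ?J}"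
    have "ideal_in R T" unfolding ideal_in_def
    proof (intro conjI ballI)
      show "T \<subseteq> R" unfolding T_def by blast
      show "0 \<in> T" unfolding T_def using rt_0[OF ac pr ch] ideal_0[OF Ji] sub_0[OF sr] by auto
    next
      fix a b assume "a \<in> T" "b \<in> T"
      then show "a + b \<in> T" unfolding T_def
        using rt_add[OF ac pr ch] ideal_add[OF Ji] sub_add[OF sr] by auto
    next
      fix r a assume r: "r \<in> R" and "a \<in> T"
      then show "r * a \<in> T" unfolding T_def
        using rt_mult[OF ac pr ch] ideal_mult[OF Ji] sub_mult[OF sr] rt_inf[OF ac pr ch sr R_sub_inf[OF ac pr ch sr r]]
        by auto
    qed
    moreover have "set xs \<subseteq> T"
    proof
      fix x assume x: "x \<in> set xs"
      have "rt p m x \<in> ?A" for m using x unfolding pth_roots_rt by blast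
      then show "x \<in> T" unfolding T_def using x xsR gen_sub[of ?A ?S] by blast
    qed
    ultimately have "ideal_gen R (set xs) \<subseteq> T" by (rule gen_least)
    then have wT: "\<forall>m. rt p m ((z ^ (p ^ n)) ^ k) \<in> ?J" using k unfolding T_def by blast
    define M where "M = n + k"
    have p2: "2 \<le> p" using pr by (simp add: prime_ge_2_nat)
    have "p ^ n * k \<le> p ^ n * p ^ k" using k_less_pow[OF p2, of k] by simp
    then have le: "p ^ n * k \<le> p ^ M" unfolding M_def by (simp add: power_add)
    define e where "e = p ^ M - p ^ n * k"
    have "z ^ (p ^ M) = z ^ e * (z ^ (p ^ n)) ^ k"
      unfolding e_def using le by (simp add: power_mult[symmetric] power_add[symmetric])
    then have "z = rt p M (z ^ e * (z ^ (p ^ n)) ^ k)" using rt_powp[OF ac pr ch, of M z] by simp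
    also have "\<dots> = rt p M (z ^ e) * rt p M ((z ^ (p ^ n)) ^ k)" by (rule rt_mult[OF ac pr ch])
    also have "\<dots> \<in> ?J"
      by (rule ideal_mult[OF Ji rt_inf[OF ac pr ch sr sub_pow[OF sS zS]] spec[OF wT]])
    finally show "z \<in> ?J" .
  qed
qed

lemma contract:
  assumes P: "prime_ideal_in (R_inf p R) P" shows "prime_ideal_in R (P \<inter> R)"
proof -
  let ?S = "R_inf p R"
  have RS: "R \<subseteq> ?S" using R_sub_inf[OF ac pr ch sr] by blast
  have Pi: "ideal_in ?S P" using prime_ideal[OF P] .
  have "1 \<notin> P"
  proof
    assume "1 \<in> P"
    then have "?S \<subseteq> P" using ideal_mult[OF Pi, of _ 1] by auto
    moreover have "P \<subseteq> ?S" using ideal_sub[OF Pi] by blast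
    moreover have "P \<noteq> ?S" using P unfolding prime_ideal_in_def by blast
    ultimately show False by blast
  qed
  have Ii: "ideal_in R (P \<inter> R)" unfolding ideal_in_def
  proof (intro conjI ballI)
    show "P \<inter> R \<subseteq> R" by blast
    show "0 \<in> P \<inter> R" using ideal_0[OF Pi] sub_0[OF sr] by blast
  next
    fix x y assume "x \<in> P \<inter> R" "y \<in> P \<inter> R"
    then show "x + y \<in> P \<inter> R" using ideal_add[OF Pi] sub_add[OF sr] by blast
  next
    fix r x assume "r \<in> R" "x \<in> P \<inter> R"
    then show "r * x \<in> P \<inter> R" using ideal_mult[OF Pi] sub_mult[OF sr] RS by blast
  qed
  have ne: "P \<inter> R \<noteq> R" using \<open>1 \<notin> P\<close> sub_1[OF sr] by blast
  have "\<forall>x\<in>R. \<forall>y\<in>R. x * y \<in> P \<inter> R \<longrightarrow> x \<in> P \<inter> R \<or> y \<in> P \<inter> R"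
  proof (intro ballI impI)
    fix x y assume "x \<in> R" "y \<in> R" "x * y \<in> P \<inter> R"
    moreover have "\<forall>x\<in>?S. \<forall>y\<in>?S. x * y \<in> P \<longrightarrow> x \<in> P \<or> y \<in> P"
      using P unfolding prime_ideal_in_def by blast
    ultimately show "x \<in> P \<inter> R \<or> y \<in> P \<inter> R" using RS by blast
  qed
  then show ?thesis using Ii ne unfolding prime_ideal_in_def by blast
qed

end


context
  fixes R :: "'a::field set"
  assumes sr: "subring_of R" and noeth: "noetherian_ring R"
begin

lemma max_exists:
  assumes I: "ideal_in R I" and ne: "I \<noteq> R"
  shows "\<exists>M. maximal_ideal_in R M \<and> I \<subseteq> M"
proof -
  define \<F> where "\<F> = {J. ideal_in R J \<and> J \<noteq> R \<and> I \<subseteq> J}"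
  have "I \<in> \<F>" unfolding \<F>_def using I ne by blast
  then obtain M where M: "M \<in> \<F>" and mx: "\<forall>J\<in>\<F>. M \<subseteq> J \<longrightarrow> J = M"
    using noeth_max[OF noeth sr, of I \<F>] unfolding \<F>_def by blast
  have Mi: "ideal_in R M" "M \<noteq> R" "I \<subseteq> M" using M unfolding \<F>_def by auto
  have "maximal_ideal_in R M" unfolding maximal_ideal_in_def
  proof (intro conjI allI impI)
    fix J assume J: "ideal_in R J \<and> M \<subseteq> J"
    show "J = M \<or> J = R"
    proof (cases "J = R")
      case False
      then have "J \<in> \<F>" using J Mi(3) unfolding \<F>_def by blast
      then show ?thesis using mx J by blast
    qed simp
  qed (use Mi in auto)
  then show ?thesis using Mi(3) by blast
qed

lemma zero_prime: "prime_ideal_in R {0}"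
  unfolding prime_ideal_in_def ideal_in_def using sub_0[OF sr] sub_1[OF sr] by auto

lemma prime_ne: "prime_ideal_in R Q \<Longrightarrow> Q \<noteq> R"
  unfolding prime_ideal_in_def by blast

context
  fixes m assumes m: "maximal_ideal_in R m" and uq: "\<And>M. maximal_ideal_in R M \<Longrightarrow> M = m"
    and dim: "krull_dim_less R 3"
begin

lemma m_prime: "prime_ideal_in R m"
proof -
  have mi: "ideal_in R m" "m \<noteq> R" using m unfolding maximal_ideal_in_def by auto
  have "a \<in> m \<or> b \<in> m" if ab: "a \<in> R" "b \<in> R" "a * b \<in> m" for a b
  proof (rule ccontr)
    assume "\<not> ?thesis"
    then have an: "a \<notin> m" "b \<notin> m" by auto
    let ?Ja = "ideal_gen R (insert a m)" and ?Jb = "ideal_gen R (insert b m)"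
    have Ja: "ideal_in R ?Ja" "m \<subseteq> ?Ja" "a \<in> ?Ja" using gen_insert_ideal[OF sr mi(1) ab(1)] gen_sub[of "insert a m" R] by auto
    have Jb: "ideal_in R ?Jb" "m \<subseteq> ?Jb" "b \<in> ?Jb" using gen_insert_ideal[OF sr mi(1) ab(2)] gen_sub[of "insert b m" R] by auto
    have "?Ja = R" using m Ja an(1) unfolding maximal_ideal_in_def by blast
    then obtain q1 s1 where A: "q1 \<in> m" "s1 \<in> R" "1 = q1 + s1 * a"
      using gen_insert_form[OF sr mi(1) ab(1), of 1] sub_1[OF sr] by auto
    have "?Jb = R" using m Jb an(2) unfolding maximal_ideal_in_def by blast
    then obtain q2 s2 where B: "q2 \<in> m" "s2 \<in> R" "1 = q2 + s2 * b"
      using gen_insert_form[OF sr mi(1) ab(2), of 1] sub_1[OF sr] by auto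
    have "(1::'a) = (q1 + s1 * a) * (q2 + s2 * b)" using A(3) B(3) by simp
    also have "\<dots> = q1 * (q2 + s2 * b) + (s1 * a) * q2 + (s1 * s2) * (a * b)"
      by (simp add: algebra_simps)
    also have "\<dots> = q1 * 1 + (s1 * a) * q2 + (s1 * s2) * (a * b)" using B(3) by simp
    finally have e: "(1::'a) = q1 * 1 + (s1 * a) * q2 + (s1 * s2) * (a * b)" .
    have "q1 * 1 \<in> m" using A(1) by simp
    moreover have "(s1 * a) * q2 \<in> m" by (rule ideal_mult[OF mi(1) sub_mult[OF sr A(2) ab(1)] B(1)])
    moreover have "(s1 * s2) * (a * b) \<in> m" by (rule ideal_mult[OF mi(1) sub_mult[OF sr A(2) B(2)] ab(3)])
    ultimately have X: "q1 * 1 + (s1 * a) * q2 + (s1 * s2) * (a * b) \<in> m" by (intro ideal_add[OF mi(1)])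
    have "(1::'a) \<in> m" using X e by metis
    then have "\<forall>r\<in>R. r \<in> m" using ideal_mult[OF mi(1), of _ 1] by auto
    then show False using mi ideal_sub[OF mi(1)] by blast
  qed
  then show ?thesis unfolding prime_ideal_in_def using mi by blast
qed

lemma sub_m: assumes "prime_ideal_in R Q" shows "Q \<subseteq> m"
proof -
  obtain M where "maximal_ideal_in R M" "Q \<subseteq> M"
    using max_exists[OF prime_ideal[OF assms] prime_ne[OF assms]] by blast
  then show ?thesis using uq by blast
qed

lemma no_chain:
  assumes "prime_ideal_in R a" "prime_ideal_in R b" "prime_ideal_in R c" "prime_ideal_in R d"
    "a \<subset> b" "b \<subset> c" "c \<subset> d"
  shows False
proof -
  define ch where "ch i = [a, b, c, d] ! i" for i
  have "\<forall>i\<le>3. prime_ideal_in R (ch i)"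
  proof (intro allI impI)
    fix i :: nat assume "i \<le> 3"
    then have "i = 0 \<or> i = 1 \<or> i = 2 \<or> i = 3" by arith
    then show "prime_ideal_in R (ch i)" using assms unfolding ch_def by auto
  qed
  moreover have "\<forall>i<3. ch i \<subset> ch (Suc i)"
  proof (intro allI impI)
    fix i :: nat assume "i < 3"
    then have "i = 0 \<or> i = 1 \<or> i = 2" by arith
    then show "ch i \<subset> ch (Suc i)" using assms unfolding ch_def by auto
  qed
  ultimately show False using dim unfolding krull_dim_less_def by blast
qed

definition mid where "mid Q \<longleftrightarrow> prime_ideal_in R Q \<and> Q \<noteq> {0} \<and> Q \<noteq> m"

lemma incomp: assumes "mid Q1" "mid Q2" "Q1 \<subseteq> Q2" shows "Q1 = Q2"
proof (rule ccontr)
  assume ne: "Q1 \<noteq> Q2"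
  have p1: "prime_ideal_in R Q1" and p2: "prime_ideal_in R Q2" using assms unfolding mid_def by auto
  have "{0} \<subset> Q1" using ideal_0[OF prime_ideal[OF p1]] assms(1) unfolding mid_def by blast
  moreover have "Q2 \<subset> m" using sub_m[OF p2] assms(2) unfolding mid_def by blast
  moreover have "Q1 \<subset> Q2" using assms(3) ne by blast
  ultimately show False using no_chain[OF zero_prime p1 p2 m_prime] by blast
qed

lemma dim_two:
  assumes q: "prime_ideal_in R q" and qm: "q \<noteq> m" and q0: "q \<noteq> {0}"
  shows "\<exists>x y. x \<in> q \<and> y \<in> q \<and> (\<forall>w\<in>q. \<exists>k. w ^ k \<in> ideal_gen R {x, y})"
proof -
  have qi: "ideal_in R q" using prime_ideal[OF q] .
  obtain x where x: "x \<in> q" "x \<noteq> 0" using q0 ideal_0[OF qi] by blast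
  have xR: "x \<in> R" using ideal_sub[OF qi x(1)] .
  have Ix: "ideal_in R (ideal_gen R {x})" by (rule gen_ideal[OF sr]) (use xR in blast)
  obtain F where F: "finite F" "\<forall>f\<in>F. prime_ideal_in R f \<and> ideal_gen R {x} \<subseteq> f"
    "\<forall>P. prime_ideal_in R P \<and> ideal_gen R {x} \<subseteq> P \<longrightarrow> (\<exists>f\<in>F. f \<subseteq> P)"
    using fin_primes[OF noeth sr Ix] unfolding good_primes_def by blast
  have xg: "x \<in> ideal_gen R {x}" using gen_sub[of "{x}" R] by blast
  define Mx where "Mx = {Q. mid Q \<and> x \<in> Q}"
  have MF: "Mx \<subseteq> F"
  proof
    fix Q assume "Q \<in> Mx"
    then have Q: "mid Q" "x \<in> Q" unfolding Mx_def by auto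
    have pQ: "prime_ideal_in R Q" using Q(1) unfolding mid_def by blast
    have "ideal_gen R {x} \<subseteq> Q" by (rule gen_least[OF prime_ideal[OF pQ]]) (use Q(2) in blast)
    then obtain f where f: "f \<in> F" "f \<subseteq> Q" using F(3) pQ by blast
    have pf: "prime_ideal_in R f" and xf: "x \<in> f" using F(2) f(1) xg by blast+
    have "f \<noteq> {0}" using xf x(2) by blast
    moreover have "f \<noteq> m" using f(2) sub_m[OF pQ] Q(1) unfolding mid_def by blast
    ultimately have "mid f" unfolding mid_def using pf by blast
    then have "f = Q" using incomp Q(1) f(2) by blast
    then show "Q \<in> F" using f(1) by blast
  qed
  have fM: "finite Mx" using finite_subset[OF MF F(1)] .
  define G where "G = Mx - {q}"
  have midq: "mid q" unfolding mid_def using q qm q0 by blast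
  have Gm: "g \<in> G \<Longrightarrow> mid g" for g unfolding G_def Mx_def by blast
  obtain y where y: "y \<in> q" "\<forall>g\<in>G. y \<notin> g"
  proof -
    have "\<exists>y\<in>q. \<forall>g\<in>G. y \<notin> g"
    proof (rule avoid[OF sr _ _ qi])
      show "finite G" unfolding G_def using fM by blast
      show "prime_ideal_in R g" if "g \<in> G" for g using Gm[OF that] unfolding mid_def by blast
      show "\<not> q \<subseteq> g" if "g \<in> G" for g
        using incomp[OF midq Gm[OF that]] that unfolding G_def by blast
      show "\<not> h \<subseteq> g" if "g \<in> G" "h \<in> G" "g \<noteq> h" for g h
        using incomp[OF Gm[OF that(2)] Gm[OF that(1)]] that(3) by blast
    qed
    then show ?thesis using that by blast
  qed
  have yR: "y \<in> R" using ideal_sub[OF qi y(1)] .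
  have "\<exists>k. w ^ k \<in> ideal_gen R {x, y}" if w: "w \<in> q" for w
  proof (rule ccontr)
    assume nk: "\<not> ?thesis"
    have Ixy: "ideal_in R (ideal_gen R {x, y})" by (rule gen_ideal[OF sr]) (use xR yR in blast)
    obtain Q where Q: "prime_ideal_in R Q" "ideal_gen R {x, y} \<subseteq> Q" "w \<notin> Q"
      using prime_avoid_pow[OF noeth sr Ixy ideal_sub[OF qi w]] nk by blast
    have xyQ: "x \<in> Q" "y \<in> Q" using Q(2) gen_sub[of "{x, y}" R] by blast+
    have "Q \<noteq> {0}" using xyQ(1) x(2) by blast
    moreover have "Q \<noteq> m" using sub_m[OF q] w Q(3) by blast
    ultimately have "Q \<in> Mx" unfolding Mx_def mid_def using Q(1) xyQ(1) by blast
    then have "Q = q \<or> Q \<in> G" unfolding G_def by blast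
    then show False using Q(3) w y(2) xyQ(2) by blast
  qed
  then show ?thesis using x(1) y(1) by blast
qed

end
end


lemma pad:
  assumes "length xs \<le> L" "set xs \<subseteq> q" "0 \<in> q" "\<forall>w\<in>q. \<exists>k. w ^ k \<in> ideal_gen R (set xs)"
  shows "\<exists>ys. length ys = L \<and> set ys \<subseteq> q \<and> (\<forall>w\<in>q. \<exists>k. w ^ k \<in> ideal_gen R (set ys))"
proof (intro exI conjI)
  let ?ys = "xs @ replicate (L - length xs) 0"
  show "length ?ys = L" using assms(1) by simp
  show "set ?ys \<subseteq> q" using assms(2,3) by auto
  have "ideal_gen R (set xs) \<subseteq> ideal_gen R (set ?ys)" by (rule gen_mono) auto
  then show "\<forall>w\<in>q. \<exists>k. w ^ k \<in> ideal_gen R (set ?ys)" using assms(4) by blast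
qed

theorem lemma7p9:
  fixes R :: "'a::field set" and p :: nat
  assumes "alg_closed_field TYPE('a)"
    and "subring_of R"
    and "algebraic_over R"
    and "prime p" and "(of_nat p :: 'a) = 0"
    and "noetherian_ring R" and "local_ring R"
  shows "(\<forall>P. prime_ideal_in (R_inf p R) P \<longrightarrow>
            (\<exists>xs. set xs \<subseteq> R_inf p R \<and>
                  P = ideal_gen (R_inf p R) (\<Union>x\<in>set xs. pth_roots p x)))
       \<and> (krull_dim_less R 3 \<longrightarrow>
           (\<exists>l::nat. \<forall>P. prime_ideal_in (R_inf p R) P \<longrightarrow>
              (\<exists>xs. length xs = l \<and> set xs \<subseteq> R_inf p R \<and>
                    P = ideal_gen (R_inf p R) (\<Union>x\<in>set xs. pth_roots p x))))"
proof -
  note ac = assms(1) and sr = assms(2) and pr = assms(4) and ch = assms(5) and noeth = assms(6)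
  have RS: "R \<subseteq> R_inf p R" using R_sub_inf[OF ac pr ch sr] by blast
  have key: "\<exists>xs. set xs \<subseteq> R_inf p R \<and> P = ideal_gen (R_inf p R) (\<Union>x\<in>set xs. pth_roots p x)
       \<and> length xs = length ys"
    if P: "prime_ideal_in (R_inf p R) P" and ys: "set ys \<subseteq> P \<inter> R"
      "\<forall>w\<in>P \<inter> R. \<exists>k. w ^ k \<in> ideal_gen R (set ys)" for P ys
  proof -
    have "P = ideal_gen (R_inf p R) (\<Union>x\<in>set ys. pth_roots p x)"
      by (rule red[OF ac pr ch sr P]) (use ys in auto)
    moreover have "set ys \<subseteq> R_inf p R" using ys(1) RS by blast
    ultimately show ?thesis by (intro exI[of _ ys] conjI) simp_all
  qed
  have part1: "\<exists>xs. set xs \<subseteq> R_inf p R \<and> P = ideal_gen (R_inf p R) (\<Union>x\<in>set xs. pth_roots p x)"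
    if P: "prime_ideal_in (R_inf p R) P" for P
  proof -
    have q: "prime_ideal_in R (P \<inter> R)" by (rule contract[OF ac pr ch sr P])
    obtain F where F: "finite F" "F \<subseteq> P \<inter> R" "P \<inter> R = ideal_gen R F"
      using noeth[unfolded noetherian_ring_def, rule_format, OF prime_ideal[OF q]] by (elim exE conjE)
    obtain ys where ys: "set ys = F" using finite_list[OF F(1)] by blast
    have "\<forall>w\<in>P \<inter> R. w ^ 1 \<in> ideal_gen R (set ys)"
      using F(3) ys by simp
    then have r: "\<forall>w\<in>P \<inter> R. \<exists>k. w ^ k \<in> ideal_gen R (set ys)" by blast
    have s: "set ys \<subseteq> P \<inter> R" using F(2) ys by simp
    obtain xs where "set xs \<subseteq> R_inf p R" "P = ideal_gen (R_inf p R) (\<Union>x\<in>set xs. pth_roots p x)"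
      using key[OF P s r] by blast
    then show ?thesis by blast
  qed
  have part2: "\<exists>l::nat. \<forall>P. prime_ideal_in (R_inf p R) P \<longrightarrow>
              (\<exists>xs. length xs = l \<and> set xs \<subseteq> R_inf p R \<and>
                    P = ideal_gen (R_inf p R) (\<Union>x\<in>set xs. pth_roots p x))"
    if dim: "krull_dim_less R 3"
  proof -
    obtain m where m: "maximal_ideal_in R m" and uq: "\<And>M. maximal_ideal_in R M \<Longrightarrow> M = m"
      using assms(7) unfolding local_ring_def by blast
    have mi: "ideal_in R m" using m unfolding maximal_ideal_in_def by blast
    obtain Fm where Fm: "finite Fm" "Fm \<subseteq> m" "m = ideal_gen R Fm"
      using noeth[unfolded noetherian_ring_def, rule_format, OF mi] by (elim exE conjE)
    obtain ms where ms: "set ms = Fm" using finite_list[OF Fm(1)] by blast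
    define L where "L = max 2 (length ms)"
    have per: "\<exists>ys. length ys = L \<and> set ys \<subseteq> q \<and> (\<forall>w\<in>q. \<exists>k. w ^ k \<in> ideal_gen R (set ys))"
      if q: "prime_ideal_in R q" for q
    proof -
      have q0: "0 \<in> q" using ideal_0[OF prime_ideal[OF q]] .
      show ?thesis
      proof (cases "q = m")
        case True
        have "\<forall>w\<in>q. w ^ 1 \<in> ideal_gen R (set ms)" using True Fm(3) ms by simp
        then have r: "\<forall>w\<in>q. \<exists>k. w ^ k \<in> ideal_gen R (set ms)" by blast
        have l: "length ms \<le> L" unfolding L_def by simp
        have s: "set ms \<subseteq> q" using True Fm(2) ms by simp
        show ?thesis by (rule pad[OF l s q0 r])
      next
        case qm: False
        show ?thesis
        proof (cases "q = {0}")
          case True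
          have "\<forall>w\<in>q. w ^ 1 \<in> ideal_gen R (set [])"
            using True ideal_0[OF gen_ideal[OF sr, of "{}"]] by simp
          then have r: "\<forall>w\<in>q. \<exists>k. w ^ k \<in> ideal_gen R (set [])" by blast
          show ?thesis by (rule pad[OF _ _ q0 r]) simp_all
        next
          case False
          obtain x y where xy: "x \<in> q" "y \<in> q" "\<forall>w\<in>q. \<exists>k. w ^ k \<in> ideal_gen R {x, y}"
            using dim_two[OF sr noeth m uq dim q qm False] by blast
          have r: "\<forall>w\<in>q. \<exists>k. w ^ k \<in> ideal_gen R (set [x, y])" using xy(3) by simp
          have l: "length [x, y] \<le> L" unfolding L_def by simp
          have s: "set [x, y] \<subseteq> q" using xy(1,2) by simp
          show ?thesis by (rule pad[OF l s q0 r])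
        qed
      qed
    qed
    show ?thesis
    proof (intro exI[of _ L] allI impI)
      fix P assume P: "prime_ideal_in (R_inf p R) P"
      have q: "prime_ideal_in R (P \<inter> R)" by (rule contract[OF ac pr ch sr P])
      obtain ys where ys: "length ys = L" "set ys \<subseteq> P \<inter> R" "\<forall>w\<in>P \<inter> R. \<exists>k. w ^ k \<in> ideal_gen R (set ys)"
        using per[OF q] by blast
      show "\<exists>xs. length xs = L \<and> set xs \<subseteq> R_inf p R \<and>
                    P = ideal_gen (R_inf p R) (\<Union>x\<in>set xs. pth_roots p x)"
      proof -
        obtain xs where "set xs \<subseteq> R_inf p R" "P = ideal_gen (R_inf p R) (\<Union>x\<in>set xs. pth_roots p x)"
          "length xs = length ys" using key[OF P ys(2,3)] by blast
        then show ?thesis using ys(1) by blast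
      qed
    qed
  qed
  show ?thesis
  proof (intro conjI allI impI)
    fix P assume "prime_ideal_in (R_inf p R) P"
    then show "\<exists>xs. set xs \<subseteq> R_inf p R \<and> P = ideal_gen (R_inf p R) (\<Union>x\<in>set xs. pth_roots p x)"
      by (rule part1)
  next
    assume "krull_dim_less R 3"
    then show "\<exists>l::nat. \<forall>P. prime_ideal_in (R_inf p R) P \<longrightarrow>
              (\<exists>xs. length xs = l \<and> set xs \<subseteq> R_inf p R \<and>
                    P = ideal_gen (R_inf p R) (\<Union>x\<in>set xs. pth_roots p x))"
      by (rule part2)
  qed
qed


end
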